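(* Let $(\mathcal{X},\rho)$ be a metric space, $\eta:\mathcal{X}\to\mathcal{Y}$ a function, and $U\subset\mathcal{X}$ a mutually-labeling set for $\eta$. Let $\mathbb{X}=(X_n)_{n\ge0}$ be an arbitrary process (or sequence) in $\mathcal{X}$ and $(\tilde X_n)_{n\ge1}$ any nearest neighbor process of it. Then \[\sum_{n=1}^\infty\mathbb{1}\{X_n\in U\text{ and }\eta(X_n)\ne\eta(\tilde X_n)\}\le1.\]
   Context: $\mathrm{margin}_\eta(x)=\inf\{\rho(x,x'):\eta(x')\ne\eta(x)\}$ (infimum of empty set $=+\infty$). A set $U$ is mutually-labeling for $\eta$ if $\mathrm{diam}(U)<\mathrm{margin}_\eta(x)$ for all $x\in U$, where $\mathrm{diam}(U)=\sup_{z,z'\in U}\rho(z,z')$. A nearest neighbor process is any $(\tilde X_n)_{n\ge1}$ with $\tilde X_n\in\arg\min_{x\in\{X_0,\dots,X_{n-1}\}}\rho(X_n,x)$. *)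

theory Defs
  imports "HOL-Analysis.Analysis" "HOL-Library.Extended_Nonnegative_Real"
begin

text \<open>margin, with the infimum of the empty set being +infinity (values in ereal).\<close>
definition margin :: "('a::metric_space \<Rightarrow> 'b) \<Rightarrow> 'a \<Rightarrow> ereal" where
  "margin \<eta> x = Inf {ereal (dist x x') | x'. \<eta> x' \<noteq> \<eta> x}"

definition diam :: "'a::metric_space set \<Rightarrow> ereal" where
  "diam U = Sup {ereal (dist z z') | z z'. z \<in> U \<and> z' \<in> U}"

definition mutually_labeling :: "('a::metric_space \<Rightarrow> 'b) \<Rightarrow> 'a set \<Rightarrow> bool" where
  "mutually_labeling \<eta> U \<longleftrightarrow> (\<forall>x\<in>U. diam U < margin \<eta> x)"

definition nn_process :: "(nat \<Rightarrow> 'a::metric_space) \<Rightarrow> (nat \<Rightarrow> 'a) \<Rightarrow> bool" where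
  "nn_process X Xt \<longleftrightarrow> (\<forall>n\<ge>1. Xt n \<in> {X i | i. i < n} \<and>
      (\<forall>i<n. dist (X n) (Xt n) \<le> dist (X n) (X i)))"

end

theory Submission
  imports Defs
begin

lemma key:
  fixes \<eta> :: "'a::metric_space \<Rightarrow> 'b"
  assumes ml: "mutually_labeling \<eta> U"
    and nn: "nn_process X Xt"
    and m: "X m \<in> U" and n: "X n \<in> U" and mn: "m < n"
  shows "\<eta> (X n) = \<eta> (Xt n)"
proof (rule ccontr)
  assume ne: "\<eta> (X n) \<noteq> \<eta> (Xt n)"
  have n1: "n \<ge> 1" using mn by simp
  have d1: "dist (X n) (Xt n) \<le> dist (X n) (X m)"
    using nn n1 mn unfolding nn_process_def by blast
  have "ereal (dist (X n) (X m)) \<le> diam U"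
    unfolding diam_def using m n by (intro Sup_upper) blast
  also have "diam U < margin \<eta> (X n)" using ml n unfolding mutually_labeling_def by blast
  also have "margin \<eta> (X n) \<le> ereal (dist (X n) (Xt n))"
    unfolding margin_def using ne by (intro Inf_lower) auto
  finally show False using d1 by simp
qed

theorem lemma2:
  fixes \<eta> :: "'a::metric_space \<Rightarrow> 'b"
    and U :: "'a set"
    and X Xt :: "nat \<Rightarrow> 'a"
  assumes "mutually_labeling \<eta> U"
    and "nn_process X Xt"
  shows "(\<Sum>n. (if X (Suc n) \<in> U \<and> \<eta> (X (Suc n)) \<noteq> \<eta> (Xt (Suc n)) then 1 else 0 :: ennreal)) \<le> 1"
proof -
  define N where "N = {n. X (Suc n) \<in> U \<and> \<eta> (X (Suc n)) \<noteq> \<eta> (Xt (Suc n))}"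
  have sub: "\<And>a b. a \<in> N \<Longrightarrow> b \<in> N \<Longrightarrow> a = b"
  proof -
    fix a b assume a: "a \<in> N" and b: "b \<in> N"
    show "a = b"
    proof (rule ccontr)
      assume "a \<noteq> b"
      then consider "a < b" | "b < a" by linarith
      then show False
        using key[OF assms, of "Suc a" "Suc b"] key[OF assms, of "Suc b" "Suc a"] a b
        unfolding N_def by auto
    qed
  qed
  have "N = {} \<or> (\<exists>k. N = {k})" using sub by blast
  then have fin: "finite N" and c: "card N \<le> 1" by auto
  have "(\<Sum>n. (if X (Suc n) \<in> U \<and> \<eta> (X (Suc n)) \<noteq> \<eta> (Xt (Suc n)) then 1 else 0 :: ennreal))
     = (\<Sum>n\<in>N. (if X (Suc n) \<in> U \<and> \<eta> (X (Suc n)) \<noteq> \<eta> (Xt (Suc n)) then 1 else 0 :: ennreal))"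
    by (rule suminf_finite[OF fin]) (simp add: N_def)
  also have "\<dots> = of_nat (card N)" by (simp add: N_def)
  also have "\<dots> \<le> 1" using c by simp
  finally show ?thesis .
qed

end
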